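(* For any bipartite unitary $U\in\mathsf{U}(\mathcal{H}_A\otimes\mathcal{H}_B)$, $$1\le R_c(U)\le\xi(U)\le 2d_A^2d_B^2-1.$$
   Context: $d_A,d_B$ are the dimensions of $\mathcal{H}_A,\mathcal{H}_B$. The product extent $\xi(U)$ is the minimum of $2\|c\|_1^2-\|c\|_2^2$ over all decompositions $U=\sum_{j=1}^m c_jV_j\otimes W_j$ with $m\ge1$, $c\in\mathbb{R}^m$, $V_j\in\mathsf{U}(\mathcal{H}_A)$, $W_j\in\mathsf{U}(\mathcal{H}_B)$. The Choi–Jamiolkowski robustness is $R_c(U):=1+2R(J_U)$, where $J_U=(\mathrm{id}_{A'B'}\otimes\mathcal{U})(\Phi)$ is the Choi state of $\mathcal{U}(\rho)=U\rho U^\dagger$ ($\Phi$ the maximally entangled state between $A'B'$ and $AB$), regarded as a bipartite state with respect to $A'A\,|\,B'B$, and for a bipartite state $\rho$, $R(\rho)=\min\{s\ge0:\frac{1}{1+s}(\rho+s\sigma_-)\text{ is separable for some separable state }\sigma_-\}$ is its robustness of entanglement. *)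

theory Defs
  imports Complex_Main
begin

type_synonym 'n cmat = "'n \<Rightarrow> 'n \<Rightarrow> complex"

definition id_mat :: "'n cmat" where
  "id_mat i j = (if i = j then 1 else 0)"

definition mmult :: "'n::finite cmat \<Rightarrow> 'n cmat \<Rightarrow> 'n cmat" where
  "mmult A B i k = (\<Sum>j\<in>UNIV. A i j * B j k)"

definition adj :: "'n cmat \<Rightarrow> 'n cmat" where
  "adj A i j = cnj (A j i)"

definition unitary :: "'n::finite cmat \<Rightarrow> bool" where
  "unitary U \<longleftrightarrow> mmult (adj U) U = id_mat \<and> mmult U (adj U) = id_mat"

definition trace :: "'n::finite cmat \<Rightarrow> complex" where
  "trace A = (\<Sum>i\<in>UNIV. A i i)"

definition kron :: "'a cmat \<Rightarrow> 'b cmat \<Rightarrow> ('a \<times> 'b) cmat" where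
  "kron V W x y = V (fst x) (fst y) * W (snd x) (snd y)"

definition hermitian :: "'n cmat \<Rightarrow> bool" where
  "hermitian A \<longleftrightarrow> adj A = A"

definition psd :: "'n::finite cmat \<Rightarrow> bool" where
  "psd A \<longleftrightarrow> hermitian A \<and>
     (\<forall>v :: 'n \<Rightarrow> complex. 0 \<le> Re (\<Sum>i\<in>UNIV. \<Sum>j\<in>UNIV. cnj (v i) * A i j * v j))"

definition density :: "'n::finite cmat \<Rightarrow> bool" where
  "density \<rho> \<longleftrightarrow> psd \<rho> \<and> trace \<rho> = 1"

definition separable :: "('a::finite \<times> 'b::finite) cmat \<Rightarrow> bool" where
  "separable \<rho> \<longleftrightarrow> (\<exists>(m::nat) (p::nat \<Rightarrow> real) (\<rho>A::nat \<Rightarrow> 'a cmat) (\<rho>B::nat \<Rightarrow> 'b cmat).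
      (\<forall>j<m. 0 \<le> p j \<and> density (\<rho>A j) \<and> density (\<rho>B j)) \<and>
      (\<Sum>j<m. p j) = 1 \<and>
      \<rho> = (\<lambda>x y. \<Sum>j<m. complex_of_real (p j) * kron (\<rho>A j) (\<rho>B j) x y))"

text \<open>Robustness of entanglement (the minimum in the paper, written as an infimum).\<close>
definition robustness :: "('a::finite \<times> 'b::finite) cmat \<Rightarrow> real" where
  "robustness \<rho> = Inf {s::real. 0 \<le> s \<and> (\<exists>\<sigma>::('a \<times> 'b) cmat. separable \<sigma> \<and>
       separable (\<lambda>x y. (\<rho> x y + complex_of_real s * \<sigma> x y) / complex_of_real (1 + s)))}"

text \<open>Choi state J_U = (id_{A'B'} \<otimes> U) \<Phi>, \<Phi> = |\<Omega>\<rangle>\<langle>\<Omega>|/(d_A d_B), \<Omega> = \<Sum>_x |x\<rangle>_{A'B'}|x\<rangle>_{AB},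
  regarded as a bipartite state w.r.t. A'A | B'B.  The index ((a',a),(b',b)) corresponds to
  the basis vector |a'\<rangle>_{A'}|b'\<rangle>_{B'}|a\<rangle>_A|b\<rangle>_B.\<close>
definition choi :: "('a::finite \<times> 'b::finite) cmat \<Rightarrow> (('a \<times> 'a) \<times> ('b \<times> 'b)) cmat" where
  "choi U x y =
     U (snd (fst x), snd (snd x)) (fst (fst x), fst (snd x)) *
     cnj (U (snd (fst y), snd (snd y)) (fst (fst y), fst (snd y))) /
     of_nat (card (UNIV :: 'a set) * card (UNIV :: 'b set))"

definition choi_robustness :: "('a::finite \<times> 'b::finite) cmat \<Rightarrow> real" where
  "choi_robustness U = 1 + 2 * robustness (choi U)"

text \<open>Product extent (the minimum in the paper, written as an infimum).\<close>
definition product_extent :: "('a::finite \<times> 'b::finite) cmat \<Rightarrow> real" where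
  "product_extent U = Inf {2 * (\<Sum>j<m. \<bar>c j\<bar>)^2 - (\<Sum>j<m. (c j)^2) | m c V W.
      1 \<le> m \<and> (\<forall>j<m. unitary ((V::nat \<Rightarrow> 'a cmat) j) \<and> unitary ((W::nat \<Rightarrow> 'b cmat) j)) \<and>
      U = (\<lambda>x y. \<Sum>j<m. complex_of_real (c j) * kron (V j) (W j) x y)}"

end

theory Submission
  imports Defs
begin

definition sepc :: "('a::finite \<times> 'b::finite) cmat \<Rightarrow> real \<Rightarrow> bool" where
  "sepc \<rho> t \<longleftrightarrow> (\<exists>(m::nat) (p::nat \<Rightarrow> real) (\<rho>A::nat \<Rightarrow> 'a cmat) (\<rho>B::nat \<Rightarrow> 'b cmat).
      (\<forall>j<m. 0 \<le> p j \<and> density (\<rho>A j) \<and> density (\<rho>B j)) \<and>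
      (\<Sum>j<m. p j) = t \<and>
      \<rho> = (\<lambda>x y. \<Sum>j<m. complex_of_real (p j) * kron (\<rho>A j) (\<rho>B j) x y))"

lemma separable_sepc: "separable \<rho> = sepc \<rho> 1"
  by (simp add: separable_def sepc_def)

lemma sepc_zero: "sepc (\<lambda>x y. 0) 0"
  unfolding sepc_def by (rule exI[of _ 0]) auto

lemma sum_lessThan_add_split:
  "(\<Sum>j<m1+m2. f j) = (\<Sum>j<m1. f j) + (\<Sum>j<m2. f (m1 + j))" for f :: "nat \<Rightarrow> 'c::comm_monoid_add"
  by (induction m2) (auto simp: add.assoc)

lemma sepc_add:
  fixes \<rho>1 :: "('a::finite \<times> 'b::finite) cmat"
  assumes "sepc \<rho>1 t1" "sepc \<rho>2 t2"
  shows "sepc (\<lambda>x y. \<rho>1 x y + \<rho>2 x y) (t1 + t2)"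
proof -
  obtain m1 :: nat and p1 :: "nat \<Rightarrow> real" and A1 :: "nat \<Rightarrow> 'a cmat" and B1 :: "nat \<Rightarrow> 'b cmat" where h1: "\<forall>j<m1. 0 \<le> p1 j \<and> density (A1 j) \<and> density (B1 j)"
    "(\<Sum>j<m1. p1 j) = t1" "\<rho>1 = (\<lambda>x y. \<Sum>j<m1. complex_of_real (p1 j) * kron (A1 j) (B1 j) x y)"
    using assms(1) unfolding sepc_def by blast
  obtain m2 :: nat and p2 :: "nat \<Rightarrow> real" and A2 :: "nat \<Rightarrow> 'a cmat" and B2 :: "nat \<Rightarrow> 'b cmat" where h2: "\<forall>j<m2. 0 \<le> p2 j \<and> density (A2 j) \<and> density (B2 j)"
    "(\<Sum>j<m2. p2 j) = t2" "\<rho>2 = (\<lambda>x y. \<Sum>j<m2. complex_of_real (p2 j) * kron (A2 j) (B2 j) x y)"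
    using assms(2) unfolding sepc_def by blast
  define p where "p j = (if j < m1 then p1 j else p2 (j - m1))" for j
  define A where "A j = (if j < m1 then A1 j else A2 (j - m1))" for j
  define B where "B j = (if j < m1 then B1 j else B2 (j - m1))" for j
  show ?thesis unfolding sepc_def
  proof (intro exI conjI)
    show "\<forall>j<m1+m2. 0 \<le> p j \<and> density (A j) \<and> density (B j)"
      using h1(1) h2(1) by (auto simp: p_def A_def B_def)
    show "(\<Sum>j<m1+m2. p j) = t1 + t2"
      unfolding sum_lessThan_add_split using h1(2) h2(2) by (simp add: p_def)
    show "(\<lambda>x y. \<rho>1 x y + \<rho>2 x y) = (\<lambda>x y. \<Sum>j<m1+m2. complex_of_real (p j) * kron (A j) (B j) x y)"
      unfolding sum_lessThan_add_split h1(3) h2(3) by (simp add: p_def A_def B_def)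
  qed
qed

lemma sepc_scale:
  fixes \<rho> :: "('a::finite \<times> 'b::finite) cmat"
  assumes "sepc \<rho> t" "0 \<le> c"
  shows "sepc (\<lambda>x y. complex_of_real c * \<rho> x y) (c * t)"
proof -
  obtain m :: nat and p :: "nat \<Rightarrow> real" and A :: "nat \<Rightarrow> 'a cmat" and B :: "nat \<Rightarrow> 'b cmat" where h: "\<forall>j<m. 0 \<le> p j \<and> density (A j) \<and> density (B j)"
    "(\<Sum>j<m. p j) = t" "\<rho> = (\<lambda>x y. \<Sum>j<m. complex_of_real (p j) * kron (A j) (B j) x y)"
    using assms(1) unfolding sepc_def by blast
  show ?thesis unfolding sepc_def
  proof (intro exI conjI)
    show "\<forall>j<m. 0 \<le> c * p j \<and> density (A j) \<and> density (B j)"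
      using h(1) assms(2) by auto
    show "(\<Sum>j<m. c * p j) = c * t" using h(2) by (metis sum_distrib_left)
    show "(\<lambda>x y. complex_of_real c * \<rho> x y) = (\<lambda>x y. \<Sum>j<m. complex_of_real (c * p j) * kron (A j) (B j) x y)"
      unfolding h(3) by (simp add: sum_distrib_left mult.assoc)
  qed
qed

lemma sepc_sum:
  assumes "finite I" "\<And>i. i \<in> I \<Longrightarrow> sepc (\<tau> i) (t i)"
  shows "sepc (\<lambda>x y. \<Sum>i\<in>I. \<tau> i x y) (\<Sum>i\<in>I. t i)"
  using assms
proof (induction I rule: finite_induct)
  case empty
  then show ?case using sepc_zero by simp
next
  case (insert a F)
  have "sepc (\<lambda>x y. \<tau> a x y + (\<Sum>i\<in>F. \<tau> i x y)) (t a + (\<Sum>i\<in>F. t i))"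
    using insert by (intro sepc_add) auto
  then show ?case using insert by simp
qed

lemma sepc_trace0:
  fixes \<rho> :: "('a::finite \<times> 'b::finite) cmat"
  assumes "sepc \<rho> 0" shows "\<rho> = (\<lambda>x y. 0)"
proof -
  obtain m :: nat and p :: "nat \<Rightarrow> real" and A :: "nat \<Rightarrow> 'a cmat" and B :: "nat \<Rightarrow> 'b cmat" where h: "\<forall>j<m. 0 \<le> p j \<and> density (A j) \<and> density (B j)"
    "(\<Sum>j<m. p j) = 0" "\<rho> = (\<lambda>x y. \<Sum>j<m. complex_of_real (p j) * kron (A j) (B j) x y)"
    using assms(1) unfolding sepc_def by blast
  have "\<forall>j\<in>{..<m}. p j = 0" using h(1) h(2) by (subst sum_nonneg_eq_0_iff[symmetric]) auto
  then show ?thesis using h(3) by simp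
qed

lemma trace_kron: "trace (kron A B) = trace A * trace B"
  unfolding trace_def kron_def
  by (simp add: sum_product UNIV_Times_UNIV[symmetric] sum.cartesian_product case_prod_unfold del: UNIV_Times_UNIV)

lemma trace_sepc:
  fixes \<rho> :: "('a::finite \<times> 'b::finite) cmat"
  assumes "sepc \<rho> t" shows "trace \<rho> = complex_of_real t"
proof -
  obtain m :: nat and p :: "nat \<Rightarrow> real" and A :: "nat \<Rightarrow> 'a cmat" and B :: "nat \<Rightarrow> 'b cmat" where h: "\<forall>j<m. 0 \<le> p j \<and> density (A j) \<and> density (B j)"
    "(\<Sum>j<m. p j) = t" "\<rho> = (\<lambda>x y. \<Sum>j<m. complex_of_real (p j) * kron (A j) (B j) x y)"
    using assms(1) unfolding sepc_def by blast
  have "trace \<rho> = (\<Sum>j<m. complex_of_real (p j) * trace (kron (A j) (B j)))"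
    unfolding h(3) trace_def by (subst sum.swap) (simp add: sum_distrib_left)
  also have "\<dots> = (\<Sum>j<m. complex_of_real (p j))"
    using h(1) by (intro sum.cong) (auto simp: trace_kron density_def)
  finally show ?thesis using h(2) by (metis of_real_sum)
qed

definition proj :: "('n \<Rightarrow> complex) \<Rightarrow> 'n cmat" where
  "proj z i j = z i * cnj (z j)"

definition nrm :: "('n::finite \<Rightarrow> complex) \<Rightarrow> real" where
  "nrm z = (\<Sum>i\<in>UNIV. (cmod (z i))^2)"

lemma nrm_nonneg: "0 \<le> nrm z" unfolding nrm_def by (simp add: sum_nonneg)

lemma nrm_zero: "nrm z = 0 \<Longrightarrow> z = (\<lambda>i. 0)"
  unfolding nrm_def by (subst (asm) sum_nonneg_eq_0_iff) auto

lemma density_proj: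
  assumes "nrm z \<noteq> 0"
  shows "density (\<lambda>i j. proj z i j / complex_of_real (nrm z))"
proof -
  let ?N = "nrm z"
  have herm: "hermitian (\<lambda>i j. proj z i j / complex_of_real ?N)"
    unfolding hermitian_def adj_def proj_def by (auto simp: fun_eq_iff mult.commute)
  have psd: "0 \<le> Re (\<Sum>i\<in>UNIV. \<Sum>j\<in>UNIV. cnj (v i) * (proj z i j / complex_of_real ?N) * v j)" for v
  proof -
    let ?S = "\<Sum>i\<in>UNIV. cnj (v i) * z i"
    have "(\<Sum>i\<in>UNIV. \<Sum>j\<in>UNIV. cnj (v i) * (proj z i j / complex_of_real ?N) * v j)
        = ?S * cnj ?S / complex_of_real ?N"
    proof -
      have "?S * cnj ?S = (\<Sum>i\<in>UNIV. \<Sum>j\<in>UNIV. (cnj (v i) * z i) * (v j * cnj (z j)))"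
        by (simp add: sum_product)
      then show ?thesis unfolding proj_def
        by (simp add: sum_divide_distrib mult_ac)
    qed
    also have "\<dots> = complex_of_real ((cmod ?S)^2 / ?N)"
      by (metis complex_norm_square of_real_divide)
    finally show ?thesis using nrm_nonneg[of z] by simp
  qed
  have tr: "trace (\<lambda>i j. proj z i j / complex_of_real ?N) = 1"
  proof -
    have "trace (\<lambda>i j. proj z i j / complex_of_real ?N) = (\<Sum>i\<in>UNIV. complex_of_real ((cmod (z i))^2)) / complex_of_real ?N"
    proof -
      have e: "\<And>i. z i * cnj (z i) = complex_of_real ((cmod (z i))^2)"
        by (rule complex_norm_square[symmetric])
      show ?thesis unfolding trace_def proj_def e sum_divide_distrib of_real_sum ..
    qed
    also have "\<dots> = 1" using assms by (simp only: of_real_sum[symmetric] nrm_def[symmetric]) simp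
    finally show ?thesis .
  qed
  show ?thesis unfolding density_def psd_def using herm psd tr by blast
qed

lemma sepc_proj:
  assumes "0 \<le> c"
  shows "sepc (\<lambda>x y. complex_of_real c * (proj z (fst x) (fst y) * proj w (snd x) (snd y))) (c * nrm z * nrm w)"
proof (cases "nrm z = 0 \<or> nrm w = 0")
  case True
  then have "z = (\<lambda>i. 0) \<or> w = (\<lambda>i. 0)" by (metis nrm_zero)
  then have "(\<lambda>x y. complex_of_real c * (proj z (fst x) (fst y) * proj w (snd x) (snd y))) = (\<lambda>x y. 0)"
    by (auto simp: proj_def fun_eq_iff)
  then show ?thesis using True sepc_zero by auto
next
  case False
  show ?thesis unfolding sepc_def
  proof (intro exI conjI)
    show "\<forall>j<1. 0 \<le> (\<lambda>_. c * nrm z * nrm w) j \<and> density ((\<lambda>_. (\<lambda>i j. proj z i j / complex_of_real (nrm z))) j)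
       \<and> density ((\<lambda>_. (\<lambda>i j. proj w i j / complex_of_real (nrm w))) j)"
      using False density_proj[of z] density_proj[of w] assms nrm_nonneg[of z] nrm_nonneg[of w] by auto
    have e: "{..<1::nat} = {0}" by auto
    show "(\<Sum>j::nat<1. (\<lambda>_. c * nrm z * nrm w) j) = c * nrm z * nrm w" unfolding e by simp
    show "(\<lambda>x y. complex_of_real c * (proj z (fst x) (fst y) * proj w (snd x) (snd y))) =
      (\<lambda>x y. \<Sum>j::nat<1. complex_of_real ((\<lambda>_. c * nrm z * nrm w) j) *
         kron ((\<lambda>_. (\<lambda>i j. proj z i j / complex_of_real (nrm z))) j) ((\<lambda>_. (\<lambda>i j. proj w i j / complex_of_real (nrm w))) j) x y)"
    proof -
      have e: "{..<1::nat} = {0}" by auto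
      show ?thesis using False unfolding e by (auto simp: kron_def fun_eq_iff field_simps)
    qed
  qed
qed

lemma sum4: "(\<Sum>q<4::nat. f q) = f 0 + f 1 + f 2 + f 3"
  by (simp add: eval_nat_numeral)

lemma polar:
  fixes a a' b b' e e' f f' :: complex
  shows "(\<Sum>q<4::nat. \<Sum>q'<4::nat. complex_of_real (Re (\<i>^(q+q'))) * ((a + \<i>^q*b) * cnj (a' + \<i>^q*b')) * ((e + \<i>^q'*f) * cnj (e' + \<i>^q'*f')))
     = 8 * (a*cnj b'*e*cnj f' + b*cnj a'*f*cnj e')"
  by (simp add: sum4 eval_nat_numeral algebra_simps)

lemma sixteen:
  fixes G H :: complex
  shows "(\<Sum>q<4::nat. \<Sum>q'<4::nat. \<bar>Re (\<i>^(q+q'))\<bar> * ((2 + 2 * Re (cnj (\<i>^q) * G)) * (2 + 2 * Re (cnj (\<i>^q') * H)))) = 32"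
  by (simp add: sum4 eval_nat_numeral algebra_simps)


lemma nrm_comb:
  fixes x u :: "'p::finite \<Rightarrow> complex" and \<omega> :: complex
  assumes "cnj \<omega> * \<omega> = 1"
  shows "nrm (\<lambda>p. x p + \<omega> * u p) = nrm x + nrm u + 2 * Re (cnj \<omega> * (\<Sum>p\<in>UNIV. x p * cnj (u p)))"
proof -
  have e: "(cmod (a + \<omega> * b))^2 = (cmod a)^2 + (cmod b)^2 + 2 * Re (cnj \<omega> * (a * cnj b))" for a b
  proof -
    have "(cmod (a + \<omega> * b))^2 = Re ((a + \<omega> * b) * cnj (a + \<omega> * b))"
      by (metis Re_complex_of_real complex_norm_square)
    also have "\<dots> = Re (a * cnj a) + Re ((cnj \<omega> * \<omega>) * (b * cnj b)) + Re (cnj \<omega> * (a * cnj b)) + Re (\<omega> * (b * cnj a))"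
      by (simp add: algebra_simps)
    also have "Re (\<omega> * (b * cnj a)) = Re (cnj \<omega> * (a * cnj b))"
      by (metis complex_cnj_cnj complex_cnj_mult cnj.sel(1) mult.commute)
    finally show ?thesis using assms
      by (simp add: complex_norm_square[symmetric] del: complex_norm_square)
  qed
  show ?thesis unfolding nrm_def e
    by (simp add: sum.distrib sum_distrib_left Re_sum[symmetric])
qed

definition offd :: "nat \<Rightarrow> (nat \<times> nat) set" where
  "offd m = {(j,k). j < m \<and> k < m \<and> j \<noteq> k}"

lemma finite_offd: "finite (offd m)"
  by (rule finite_subset[of _ "{..<m} \<times> {..<m}"]) (auto simp: offd_def)

lemma sum_square_split:
  fixes g :: "nat \<Rightarrow> nat \<Rightarrow> 'c::comm_monoid_add"
  shows "(\<Sum>j<m. \<Sum>k<m. g j k) = (\<Sum>j<m. g j j) + (\<Sum>jk\<in>offd m. g (fst jk) (snd jk))"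
proof -
  have "(\<Sum>j<m. \<Sum>k<m. g j k) = (\<Sum>jk\<in>{..<m} \<times> {..<m}. g (fst jk) (snd jk))"
    by (simp add: sum.cartesian_product case_prod_unfold)
  also have "{..<m} \<times> {..<m} = (\<lambda>j. (j,j)) ` {..<m} \<union> offd m"
    by (auto simp: offd_def)
  also have "(\<Sum>jk\<in>(\<lambda>j. (j,j)) ` {..<m} \<union> offd m. g (fst jk) (snd jk))
     = (\<Sum>jk\<in>(\<lambda>j. (j,j)) ` {..<m}. g (fst jk) (snd jk)) + (\<Sum>jk\<in>offd m. g (fst jk) (snd jk))"
    using finite_offd[of m] by (intro sum.union_disjoint) (auto simp: offd_def)
  also have "(\<Sum>jk\<in>(\<lambda>j. (j,j)) ` {..<m}. g (fst jk) (snd jk)) = (\<Sum>j<m. g j j)"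
    by (subst sum.reindex) (auto simp: inj_on_def)
  finally show ?thesis .
qed

lemma sum_offd_swap:
  fixes g :: "nat \<Rightarrow> nat \<Rightarrow> 'c::comm_monoid_add"
  shows "(\<Sum>jk\<in>offd m. g (fst jk) (snd jk)) = (\<Sum>jk\<in>offd m. g (snd jk) (fst jk))"
proof -
  have b: "bij_betw (\<lambda>jk. (snd jk, fst jk)) (offd m) (offd m)"
    by (rule bij_betw_imageI) (auto simp: offd_def inj_on_def image_iff)
  show ?thesis using sum.reindex_bij_betw[OF b, of "\<lambda>jk. g (fst jk) (snd jk)"] by simp
qed

lemma sum_abs_square:
  fixes c :: "nat \<Rightarrow> real"
  shows "(\<Sum>j<m. \<bar>c j\<bar>)^2 = (\<Sum>j<m. (c j)^2) + (\<Sum>jk\<in>offd m. \<bar>c (fst jk) * c (snd jk)\<bar>)"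
proof -
  have "(\<Sum>j<m. \<bar>c j\<bar>)^2 = (\<Sum>j<m. \<Sum>k<m. \<bar>c j * c k\<bar>)"
    by (simp add: power2_eq_square sum_product abs_mult)
  also have "\<dots> = (\<Sum>j<m. \<bar>c j * c j\<bar>) + (\<Sum>jk\<in>offd m. \<bar>c (fst jk) * c (snd jk)\<bar>)"
    by (rule sum_square_split)
  finally show ?thesis by (simp add: power2_eq_square)
qed

definition rI :: "(nat \<Rightarrow> real) \<Rightarrow> (nat \<times> nat) \<times> (nat \<times> nat) \<Rightarrow> real" where
  "rI c i = c (fst (fst i)) * c (snd (fst i)) * Re (\<i>^(fst (snd i) + snd (snd i))) / 16"
definition zI :: "(nat \<Rightarrow> 'p \<Rightarrow> complex) \<Rightarrow> (nat \<times> nat) \<times> (nat \<times> nat) \<Rightarrow> 'p \<Rightarrow> complex" where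
  "zI x i = (\<lambda>p. x (fst (fst i)) p + \<i>^(fst (snd i)) * x (snd (fst i)) p)"
definition wI :: "(nat \<Rightarrow> 'p \<Rightarrow> complex) \<Rightarrow> (nat \<times> nat) \<times> (nat \<times> nat) \<Rightarrow> 'p \<Rightarrow> complex" where
  "wI y i = (\<lambda>p. y (fst (fst i)) p + \<i>^(snd (snd i)) * y (snd (fst i)) p)"
definition Idx :: "nat \<Rightarrow> ((nat \<times> nat) \<times> (nat \<times> nat)) set" where
  "Idx m = offd m \<times> ({..<4} \<times> {..<4})"
definition TT where
  "TT x y i X Y = proj (zI x i) (fst X) (fst Y) * proj (wI y i) (snd X) (snd Y)"
definition DD where
  "DD x y j X Y = proj (x j) (fst X) (fst Y) * proj (y j) (snd X) (snd Y)"
definition taup where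
  "taup c x y m X Y = (\<Sum>j<m. complex_of_real ((c j)^2) * DD x y j X Y)
      + (\<Sum>i\<in>Idx m. complex_of_real (max 0 (rI c i)) * TT x y i X Y)"
definition taum where
  "taum c x y m X Y = (\<Sum>i\<in>Idx m. complex_of_real (max 0 (- rI c i)) * TT x y i X Y)"
definition psi where
  "psi c x y m X = (\<Sum>j<m. complex_of_real (c j) * x j (fst X) * y j (snd X))"

lemma finite_Idx: "finite (Idx m)"
  unfolding Idx_def using finite_offd by auto

lemma expand:
  "psi c x y m X * cnj (psi c x y m Y) = taup c x y m X Y - taum c x y m X Y"
proof -
  define g where "g j k = complex_of_real (c j * c k) *
      (x j (fst X) * cnj (x k (fst Y)) * (y j (snd X) * cnj (y k (snd Y))))" for j k
  have 1: "psi c x y m X * cnj (psi c x y m Y) = (\<Sum>j<m. \<Sum>k<m. g j k)"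
    unfolding psi_def g_def by (simp add: sum_product algebra_simps)
  have 2: "(\<Sum>j<m. \<Sum>k<m. g j k) = (\<Sum>j<m. g j j) + (\<Sum>jk\<in>offd m. g (fst jk) (snd jk))"
    by (rule sum_square_split)
  have 3: "(\<Sum>jk\<in>offd m. g (fst jk) (snd jk)) = (\<Sum>jk\<in>offd m. (g (fst jk) (snd jk) + g (snd jk) (fst jk)) / 2)"
    using sum_offd_swap[of g m] by (simp add: sum.distrib sum_divide_distrib[symmetric])
  have 4: "(g j k + g k j) / 2 = (\<Sum>q<4::nat. \<Sum>q'<4::nat. complex_of_real (rI c ((j,k),(q,q'))) * TT x y ((j,k),(q,q')) X Y)" for j k
  proof -
    have "(\<Sum>q<4::nat. \<Sum>q'<4::nat. complex_of_real (rI c ((j,k),(q,q'))) * TT x y ((j,k),(q,q')) X Y)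
       = complex_of_real (c j * c k / 16) * (\<Sum>q<4::nat. \<Sum>q'<4::nat. complex_of_real (Re (\<i>^(q+q'))) *
           ((x j (fst X) + \<i>^q * x k (fst X)) * cnj (x j (fst Y) + \<i>^q * x k (fst Y))) *
           ((y j (snd X) + \<i>^q' * y k (snd X)) * cnj (y j (snd Y) + \<i>^q' * y k (snd Y))))"
      unfolding rI_def TT_def proj_def zI_def wI_def by (simp add: sum_distrib_left algebra_simps)
    also have "\<dots> = (g j k + g k j) / 2"
      unfolding polar g_def by (simp add: algebra_simps)
    finally show ?thesis by simp
  qed
  have 5: "(\<Sum>jk\<in>offd m. (\<Sum>q<4::nat. \<Sum>q'<4::nat. F ((fst jk, snd jk),(q,q')))) = (\<Sum>i\<in>Idx m. F i)" for F :: "_ \<Rightarrow> complex"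
    unfolding Idx_def by (simp add: sum.cartesian_product case_prod_unfold)
  have 6: "complex_of_real r = complex_of_real (max 0 r) - complex_of_real (max 0 (- r))" for r
    by (simp add: max_def)
  have "psi c x y m X * cnj (psi c x y m Y) = (\<Sum>j<m. g j j) + (\<Sum>i\<in>Idx m. complex_of_real (rI c i) * TT x y i X Y)"
    unfolding 1 2 3 4 using 5[of "\<lambda>i. complex_of_real (rI c i) * TT x y i X Y"] by simp
  also have "(\<Sum>j<m. g j j) = (\<Sum>j<m. complex_of_real ((c j)^2) * DD x y j X Y)"
    unfolding g_def DD_def proj_def by (simp add: power2_eq_square algebra_simps)
  also have "(\<Sum>i\<in>Idx m. complex_of_real (rI c i) * TT x y i X Y)
      = (\<Sum>i\<in>Idx m. complex_of_real (max 0 (rI c i)) * TT x y i X Y) - taum c x y m X Y"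
    unfolding taum_def by (subst 6) (simp add: algebra_simps sum_subtractf)
  finally show ?thesis unfolding taup_def by simp
qed

lemma nrm_zI:
  assumes "nrm (x j) = 1" "nrm (x k) = 1"
  shows "nrm (zI x ((j,k),(q,q'))) = 2 + 2 * Re (cnj (\<i>^q) * (\<Sum>p\<in>UNIV. x j p * cnj (x k p)))"
proof -
  have "cnj (\<i>^q) * \<i>^q = 1"
    by (metis complex_norm_square mult.commute norm_ii norm_power of_real_1 one_power2 power_one)
  then show ?thesis unfolding zI_def using nrm_comb[of "\<i>^q" "x j" "x k"] assms by simp
qed

lemma nrm_wI:
  assumes "nrm (y j) = 1" "nrm (y k) = 1"
  shows "nrm (wI y ((j,k),(q,q'))) = 2 + 2 * Re (cnj (\<i>^q') * (\<Sum>p\<in>UNIV. y j p * cnj (y k p)))"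
proof -
  have "cnj (\<i>^q') * \<i>^q' = 1"
    by (metis complex_norm_square mult.commute norm_ii norm_power of_real_1 one_power2 power_one)
  then show ?thesis unfolding wI_def using nrm_comb[of "\<i>^q'" "y j" "y k"] assms by simp
qed

lemma rob_bound:
  fixes x :: "nat \<Rightarrow> 'p::finite \<Rightarrow> complex" and y :: "nat \<Rightarrow> 'q::finite \<Rightarrow> complex"
    and \<rho> :: "('p \<times> 'q) cmat"
  assumes nx: "\<forall>j<m. nrm (x j) = 1 \<and> nrm (y j) = 1"
    and rho: "\<rho> = (\<lambda>X Y. psi c x y m X * cnj (psi c x y m Y))"
    and tr: "trace \<rho> = 1"
  shows "0 \<le> (2*(\<Sum>j<m. \<bar>c j\<bar>)^2 - (\<Sum>j<m. (c j)^2) - 1)/2 \<and>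
    (\<exists>\<sigma>. separable \<sigma> \<and> separable (\<lambda>a b. (\<rho> a b + complex_of_real ((2*(\<Sum>j<m. \<bar>c j\<bar>)^2 - (\<Sum>j<m. (c j)^2) - 1)/2) * \<sigma> a b)
        / complex_of_real (1 + (2*(\<Sum>j<m. \<bar>c j\<bar>)^2 - (\<Sum>j<m. (c j)^2) - 1)/2)))"
proof -
  define tp where "tp = (\<Sum>j<m. (c j)^2 * nrm (x j) * nrm (y j)) + (\<Sum>i\<in>Idx m. max 0 (rI c i) * nrm (zI x i) * nrm (wI y i))"
  define tm where "tm = (\<Sum>i\<in>Idx m. max 0 (- rI c i) * nrm (zI x i) * nrm (wI y i))"
  have sp: "sepc (\<lambda>X Y. taup c x y m X Y) tp"
    unfolding taup_def DD_def TT_def tp_def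
    by (intro sepc_add sepc_sum sepc_proj finite_Idx) auto
  have sm: "sepc (\<lambda>X Y. taum c x y m X Y) tm"
    unfolding taum_def TT_def tm_def
    by (intro sepc_sum sepc_proj finite_Idx) auto
  have rho2: "\<rho> = (\<lambda>X Y. taup c x y m X Y - taum c x y m X Y)"
    unfolding rho expand ..
  have "trace \<rho> = trace (\<lambda>X Y. taup c x y m X Y) - trace (\<lambda>X Y. taum c x y m X Y)"
    unfolding rho2 trace_def by (simp add: sum_subtractf)
  then have d1: "tp - tm = 1"
    using tr trace_sepc[OF sp] trace_sepc[OF sm] by (metis of_real_1 of_real_diff of_real_eq_iff)
  have tm0: "0 \<le> tm" unfolding tm_def by (intro sum_nonneg mult_nonneg_nonneg nrm_nonneg) auto
  have "tp + tm = (\<Sum>j<m. (c j)^2) + (\<Sum>i\<in>Idx m. \<bar>rI c i\<bar> * nrm (zI x i) * nrm (wI y i))"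
  proof -
    have "(\<Sum>j<m. (c j)^2 * nrm (x j) * nrm (y j)) = (\<Sum>j<m. (c j)^2)"
      using nx by (intro sum.cong) auto
    moreover have "max 0 r * a + max 0 (-r) * a = \<bar>r\<bar> * a" for r a :: real
      by (simp add: max_def algebra_simps)
    ultimately show ?thesis unfolding tp_def tm_def
      by (simp add: sum.distrib[symmetric] mult.assoc)
  qed
  also have "(\<Sum>i\<in>Idx m. \<bar>rI c i\<bar> * nrm (zI x i) * nrm (wI y i)) = (\<Sum>jk\<in>offd m. 2 * \<bar>c (fst jk) * c (snd jk)\<bar>)"
  proof -
    have "(\<Sum>i\<in>Idx m. \<bar>rI c i\<bar> * nrm (zI x i) * nrm (wI y i)) =
      (\<Sum>jk\<in>offd m. \<Sum>q<4::nat. \<Sum>q'<4::nat. \<bar>rI c (jk,(q,q'))\<bar> * nrm (zI x (jk,(q,q'))) * nrm (wI y (jk,(q,q'))))"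
      unfolding Idx_def by (simp add: sum.cartesian_product case_prod_unfold)
    also have "\<dots> = (\<Sum>jk\<in>offd m. 2 * \<bar>c (fst jk) * c (snd jk)\<bar>)"
    proof (intro sum.cong refl)
      fix jk assume jk: "jk \<in> offd m"
      obtain j k where jk': "jk = (j,k)" by force
      have n: "nrm (x j) = 1" "nrm (x k) = 1" "nrm (y j) = 1" "nrm (y k) = 1"
        using jk nx unfolding jk' offd_def by auto
      let ?G = "\<Sum>p\<in>UNIV. x j p * cnj (x k p)" and ?H = "\<Sum>p\<in>UNIV. y j p * cnj (y k p)"
      have "(\<Sum>q<4::nat. \<Sum>q'<4::nat. \<bar>rI c (jk,(q,q'))\<bar> * nrm (zI x (jk,(q,q'))) * nrm (wI y (jk,(q,q'))))
         = \<bar>c j * c k\<bar> / 16 * (\<Sum>q<4::nat. \<Sum>q'<4::nat. \<bar>Re (\<i>^(q+q'))\<bar> * ((2 + 2 * Re (cnj (\<i>^q) * ?G)) * (2 + 2 * Re (cnj (\<i>^q') * ?H))))"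
      proof -
        have gen: "\<bar>a * b * r / 16\<bar> * A * B = \<bar>a * b\<bar> / 16 * (\<bar>r\<bar> * (A * B))" for a b r A B :: real
          by (simp add: abs_mult)
        show ?thesis
          unfolding jk' nrm_zI[OF n(1,2)] nrm_wI[OF n(3,4)] rI_def gen sum_distrib_left fst_conv snd_conv ..
      qed
      also have "\<dots> = 2 * \<bar>c j * c k\<bar>" unfolding sixteen by simp
      finally show "(\<Sum>q<4::nat. \<Sum>q'<4::nat. \<bar>rI c (jk,(q,q'))\<bar> * nrm (zI x (jk,(q,q'))) * nrm (wI y (jk,(q,q'))))
         = 2 * \<bar>c (fst jk) * c (snd jk)\<bar>" unfolding jk' by simp
    qed
    finally show ?thesis .
  qed
  also have "(\<Sum>jk\<in>offd m. 2 * \<bar>c (fst jk) * c (snd jk)\<bar>) = 2 * ((\<Sum>j<m. \<bar>c j\<bar>)^2 - (\<Sum>j<m. (c j)^2))"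
    unfolding sum_abs_square by (simp add: sum_distrib_left)
  finally have d2: "tp + tm = 2*(\<Sum>j<m. \<bar>c j\<bar>)^2 - (\<Sum>j<m. (c j)^2)" by simp
  have tmv: "tm = (2*(\<Sum>j<m. \<bar>c j\<bar>)^2 - (\<Sum>j<m. (c j)^2) - 1)/2" using d1 d2 by simp
  have "\<exists>\<sigma>. separable \<sigma> \<and> separable (\<lambda>a b. (\<rho> a b + complex_of_real tm * \<sigma> a b) / complex_of_real (1 + tm))"
  proof (cases "tm = 0")
    case True
    have z: "(\<lambda>X Y. taum c x y m X Y) = (\<lambda>X Y. 0)" using sm True sepc_trace0 by auto
    have "\<rho> = (\<lambda>X Y. taup c x y m X Y)" unfolding rho2 using z by (metis diff_zero)
    moreover have "separable (\<lambda>X Y. taup c x y m X Y)" unfolding separable_sepc using sp d1 True by simp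
    ultimately show ?thesis using True by (intro exI[of _ \<rho>]) simp
  next
    case False
    then have tpos: "0 < tm" using tm0 by simp
    define \<sigma> where "\<sigma> = (\<lambda>X Y. complex_of_real (1/tm) * taum c x y m X Y)"
    have s1: "separable \<sigma>" unfolding separable_sepc \<sigma>_def
      using sepc_scale[OF sm, of "1/tm"] tpos by simp
    have e: "(\<lambda>a b. (\<rho> a b + complex_of_real tm * \<sigma> a b) / complex_of_real (1 + tm))
        = (\<lambda>X Y. complex_of_real (1/(1+tm)) * taup c x y m X Y)"
      unfolding rho2 \<sigma>_def using tpos by (auto simp: fun_eq_iff field_simps)
    have s2: "separable (\<lambda>a b. (\<rho> a b + complex_of_real tm * \<sigma> a b) / complex_of_real (1 + tm))"
      unfolding e separable_sepc using sepc_scale[OF sp, of "1/(1+tm)"] tpos d1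
      by (simp add: field_simps)
    show ?thesis using s1 s2 by blast
  qed
  then show ?thesis using tmv tm0 by simp
qed

lemma mult_cnj_real: "z * cnj z = complex_of_real ((cmod z)^2)"
  by (rule complex_norm_square[symmetric])

lemma cnj_mult_real: "cnj z * z = complex_of_real ((cmod z)^2)"
  by (metis complex_norm_square mult.commute)

lemma unitary_colsum:
  fixes V :: "'n::finite cmat"
  assumes "unitary V"
  shows "(\<Sum>i\<in>UNIV. \<Sum>j\<in>UNIV. (cmod (V j i))^2) = real (card (UNIV :: 'n set))"
proof -
  have "(\<Sum>j\<in>UNIV. (cmod (V j i))^2) = 1" for i
  proof -
    have "mmult (adj V) V i i = 1" using assms unfolding unitary_def by (simp add: id_mat_def)
    then have "(\<Sum>j\<in>UNIV. cnj (V j i) * V j i) = 1" unfolding mmult_def adj_def by simp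
    then have "complex_of_real (\<Sum>j\<in>UNIV. (cmod (V j i))^2) = 1"
      unfolding cnj_mult_real of_real_sum .
    then show ?thesis by (metis of_real_eq_1_iff)
  qed
  then show ?thesis by simp
qed

lemma choi_psi:
  fixes U :: "('a::finite \<times> 'b::finite) cmat"
  assumes U: "U = (\<lambda>x y. \<Sum>j<m. complex_of_real (c j) * kron (V j) (W j) x y)"
  defines "xv \<equiv> (\<lambda>j (p::'a\<times>'a). V j (snd p) (fst p) / complex_of_real (sqrt (real (card (UNIV::'a set)))))"
  defines "yv \<equiv> (\<lambda>j (p::'b\<times>'b). W j (snd p) (fst p) / complex_of_real (sqrt (real (card (UNIV::'b set)))))"
  shows "choi U = (\<lambda>X Y. psi c xv yv m X * cnj (psi c xv yv m Y))"
proof -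
  let ?a = "sqrt (real (card (UNIV::'a set)))" and ?b = "sqrt (real (card (UNIV::'b set)))"
  have pa: "?a * ?a = real (card (UNIV::'a set))" by simp
  have pb: "?b * ?b = real (card (UNIV::'b set))" by simp
  have ps: "psi c xv yv m X = U (snd (fst X), snd (snd X)) (fst (fst X), fst (snd X)) / (complex_of_real ?a * complex_of_real ?b)" for X
    unfolding psi_def U xv_def yv_def kron_def by (simp add: sum_divide_distrib algebra_simps)
  have q: "(complex_of_real ?a * complex_of_real ?b) * (complex_of_real ?a * complex_of_real ?b)
      = of_nat (card (UNIV::'a set) * card (UNIV::'b set))"
  proof -
    have "(complex_of_real ?a * complex_of_real ?b) * (complex_of_real ?a * complex_of_real ?b)
        = complex_of_real ((?a * ?a) * (?b * ?b))" by (simp only: of_real_mult) (simp add: mult_ac)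
    also have "\<dots> = complex_of_real (real (card (UNIV::'a set) * card (UNIV::'b set)))"
      unfolding pa pb by simp
    finally show ?thesis by simp
  qed
  have "choi U X Y = psi c xv yv m X * cnj (psi c xv yv m Y)" for X Y
    unfolding choi_def ps q[symmetric] by simp
  then show ?thesis by (intro ext) blast
qed

lemma nrm_xv:
  fixes V :: "'a::finite cmat"
  assumes "unitary V"
  shows "nrm (\<lambda>(p::'a\<times>'a). V (snd p) (fst p) / complex_of_real (sqrt (real (card (UNIV::'a set))))) = 1"
proof -
  have "nrm (\<lambda>(p::'a\<times>'a). V (snd p) (fst p) / complex_of_real (sqrt (real (card (UNIV::'a set)))))
     = (\<Sum>i\<in>UNIV. \<Sum>j\<in>UNIV. (cmod (V j i))^2) / real (card (UNIV::'a set))"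
    unfolding nrm_def
    by (simp add: norm_divide power_divide sum_divide_distrib UNIV_Times_UNIV[symmetric] sum.cartesian_product case_prod_unfold del: UNIV_Times_UNIV)
  also have "\<dots> = 1" using unitary_colsum[OF assms] by simp
  finally show ?thesis .
qed

lemma trace_choi:
  fixes U :: "('a::finite \<times> 'b::finite) cmat"
  assumes "unitary U"
  shows "trace (choi U) = 1"
proof -
  let ?d = "card (UNIV::'a set) * card (UNIV::'b set)"
  define h :: "('a \<times> 'a) \<times> ('b \<times> 'b) \<Rightarrow> ('a \<times> 'b) \<times> ('a \<times> 'b)" where
    "h X = ((snd (fst X), snd (snd X)), (fst (fst X), fst (snd X)))" for X
  have bij: "bij_betw h UNIV UNIV"
    by (rule bij_betw_imageI) (auto simp: h_def inj_on_def image_iff)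
  have "trace (choi U) = (\<Sum>X\<in>UNIV. complex_of_real ((cmod (U (fst (h X)) (snd (h X))))^2)) / of_nat ?d"
    unfolding trace_def choi_def h_def mult_cnj_real sum_divide_distrib by simp
  also have "(\<Sum>X\<in>UNIV. complex_of_real ((cmod (U (fst (h X)) (snd (h X))))^2))
     = (\<Sum>Z\<in>UNIV. complex_of_real ((cmod (U (fst Z) (snd Z)))^2))"
    using sum.reindex_bij_betw[OF bij, of "\<lambda>Z. complex_of_real ((cmod (U (fst Z) (snd Z)))^2)"] by simp
  also have "\<dots> = (\<Sum>j\<in>UNIV. \<Sum>i\<in>UNIV. complex_of_real ((cmod (U j i))^2))"
    by (simp add: sum.cartesian_product case_prod_unfold)
  also have "\<dots> = (\<Sum>i\<in>UNIV. \<Sum>j\<in>UNIV. complex_of_real ((cmod (U j i))^2))"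
    by (rule sum.swap)
  also have "\<dots> = complex_of_real (\<Sum>i\<in>UNIV. \<Sum>j\<in>UNIV. (cmod (U j i))^2)"
    by (simp only: of_real_sum)
  also have "\<dots> = of_nat ?d" unfolding unitary_colsum[OF assms] by (simp add: UNIV_Times_UNIV[symmetric] card_cartesian_product del: UNIV_Times_UNIV)
  finally show ?thesis by simp
qed

lemma mod_inj:
  fixes y y' a n :: nat
  assumes "y < n" "y' < n" "(y + a) mod n = (y' + a) mod n"
  shows "y = y'"
proof -
  { fix u v :: nat assume uv: "u < n" "v < n" "v \<le> u" "(u + a) mod n = (v + a) mod n"
    then have "n dvd (u + a) - (v + a)" using mod_eq_dvd_iff_nat[of "v + a" "u + a" n] by simp
    then have "n dvd u - v" by simp
    moreover have "u - v < n" using uv by simp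
    ultimately have "u - v = 0" by (metis dvd_imp_le not_less neq0_conv)
    then have "u = v" using uv(3) by simp }
  then show ?thesis using assms by (metis nat_le_linear)
qed

lemma mod_uniq:
  fixes t a n :: nat
  assumes "t < n"
  shows "\<exists>!y. y < n \<and> (y + a) mod n = t"
proof -
  have n: "0 < n" using assms by simp
  let ?g = "\<lambda>y. (y + a) mod n"
  have inj: "inj_on ?g {..<n}"
  proof (rule inj_onI)
    fix y y' assume "y \<in> {..<n}" "y' \<in> {..<n}" "?g y = ?g y'"
    then show "y = y'" using mod_inj[of y n y' a] by simp
  qed
  have "?g ` {..<n} \<subseteq> {..<n}" using n by auto
  then have "?g ` {..<n} = {..<n}" using endo_inj_surj[of "{..<n}" ?g] inj by simp
  then have "t \<in> ?g ` {..<n}" using assms by simp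
  then obtain y where y: "y < n" "?g y = t" by auto
  show ?thesis
  proof (rule ex1I[of _ y])
    show "y < n \<and> ?g y = t" using y by simp
    fix y' assume "y' < n \<and> ?g y' = t"
    then show "y' = y" using mod_inj[of y' n y a] y by simp
  qed
qed

lemma geo_cis:
  fixes \<delta> :: int and n :: nat
  assumes "\<bar>\<delta>\<bar> < int n"
  shows "(\<Sum>b<n. cis (2 * pi * real b * real_of_int \<delta> / real n)) = (if \<delta> = 0 then of_nat n else 0)"
proof -
  have n: "0 < n" using assms by simp
  let ?r = "cis (2 * pi * real_of_int \<delta> / real n)"
  have e: "cis (2 * pi * real b * real_of_int \<delta> / real n) = ?r ^ b" for b
    by (simp add: DeMoivre algebra_simps)
  have rn: "?r ^ n = 1"
  proof -
    have "?r ^ n = cis (2 * pi * real_of_int \<delta>)" using n by (simp add: DeMoivre)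
    also have "\<dots> = 1" unfolding cis.ctr using cos_int_2pin[of \<delta>] sin_int_2pin[of \<delta>]
      by (simp add: complex_eq_iff mult_ac)
    finally show ?thesis .
  qed
  show ?thesis
  proof (cases "\<delta> = 0")
    case True then show ?thesis by simp
  next
    case False
    have "?r \<noteq> 1"
    proof
      assume "?r = 1"
      then have "cos (2 * pi * real_of_int \<delta> / real n) = 1" by (metis cis.sel(1) one_complex.sel(1))
      then obtain k :: int where k: "2 * pi * real_of_int \<delta> / real n = real_of_int k * 2 * pi"
        using cos_one_2pi_int by blast
      then have "real_of_int \<delta> = real_of_int k * real n" using n by (simp add: field_simps)
      then have "\<delta> = k * int n" by (metis of_int_eq_iff of_int_mult of_int_of_nat_eq)
      then have "k \<noteq> 0" using False by simp
      then have "1 \<le> \<bar>k\<bar>" by simp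
      then have "int n \<le> \<bar>k\<bar> * int n" using n by simp
      also have "\<bar>k\<bar> * int n = \<bar>\<delta>\<bar>" using \<open>\<delta> = k * int n\<close> by (simp add: abs_mult)
      finally show False using assms by simp
    qed
    then show ?thesis unfolding e using sum_gp_strict[of ?r n] rn False by simp
  qed
qed

definition enumf :: "'n::finite \<Rightarrow> nat" where
  "enumf = (SOME f. bij_betw f (UNIV::'n set) {..<card (UNIV::'n set)})"

lemma bij_enumf: "bij_betw (enumf::'n::finite \<Rightarrow> nat) UNIV {..<card (UNIV::'n set)}"
proof -
  have "\<exists>f. bij_betw f (UNIV::'n set) {..<card (UNIV::'n set)}"
    using ex_bij_betw_finite_nat[of "UNIV::'n set"] by (simp add: atLeast0LessThan)
  then show ?thesis unfolding enumf_def by (rule someI_ex)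
qed

lemma enumf_lt: "enumf (j::'n::finite) < card (UNIV::'n set)"
  using bij_betwE[OF bij_enumf[where 'n='n]] by simp

lemma enumf_inj: "enumf (i::'n::finite) = enumf k \<Longrightarrow> i = k"
proof -
  have "inj (enumf::'n \<Rightarrow> nat)" using bij_enumf[where 'n='n] by (rule bij_betw_imp_inj_on)
  then show "enumf (i::'n::finite) = enumf k \<Longrightarrow> i = k" by (simp add: inj_eq)
qed

lemma sum_enum: "(\<Sum>j\<in>(UNIV::'n::finite set). h (enumf j)) = (\<Sum>y<card (UNIV::'n set). h y)"
  using sum.reindex_bij_betw[OF bij_enumf[where 'n='n], of h] by simp

lemma sum_unique:
  fixes c :: "'c::comm_monoid_add" and N :: nat
  assumes "\<exists>!y. y < N \<and> P y"
  shows "(\<Sum>y<N. if P y then c else 0) = c"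
proof -
  from assms obtain y0 where y0: "y0 < N \<and> P y0" and u0: "\<forall>y. y < N \<and> P y \<longrightarrow> y = y0"
    by (rule ex1E)
  have S: "{y \<in> {..<N}. P y} = {y0}"
  proof (rule set_eqI)
    fix y show "y \<in> {y \<in> {..<N}. P y} \<longleftrightarrow> y \<in> {y0}"
      using y0 u0[rule_format, of y] by blast
  qed
  have "(\<Sum>y<N. if P y then c else 0) = (\<Sum>y\<in>{y \<in> {..<N}. P y}. c)"
    by (rule sum.inter_filter[symmetric]) simp
  also have "\<dots> = c" unfolding S by simp
  finally show ?thesis .
qed

definition weyl :: "nat \<Rightarrow> nat \<Rightarrow> 'n::finite cmat" where
  "weyl a b i j = (if enumf i = (enumf j + a) mod card (UNIV::'n set)
      then cis (2 * pi * real b * real (enumf j) / real (card (UNIV::'n set))) else 0)"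

lemma cnj_cis_mult_self: "cnj (cis t) * cis t = 1" "cis t * cnj (cis t) = 1"
  by (simp_all add: cis_cnj cis_mult)

lemma weyl_unitary: "unitary (weyl a b :: 'n::finite cmat)"
proof -
  let ?N = "card (UNIV::'n set)"
  let ?W = "weyl a b :: 'n cmat"
  have N: "0 < ?N" by (simp add: finite_UNIV_card_ge_0)
  have 1: "mmult (adj ?W) ?W i k = id_mat i k" for i k
  proof -
    have "mmult (adj ?W) ?W i k = (\<Sum>j\<in>(UNIV::'n set). (\<lambda>y. if y = (enumf i + a) mod ?N \<and> y = (enumf k + a) mod ?N
        then cnj (cis (2 * pi * real b * real (enumf i) / real ?N)) * cis (2 * pi * real b * real (enumf k) / real ?N) else 0) (enumf j))"
      unfolding mmult_def adj_def weyl_def by (rule sum.cong) auto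
    also have "\<dots> = (\<Sum>y<?N. if y = (enumf i + a) mod ?N \<and> y = (enumf k + a) mod ?N
        then cnj (cis (2 * pi * real b * real (enumf i) / real ?N)) * cis (2 * pi * real b * real (enumf k) / real ?N) else 0)"
      by (rule sum_enum)
    also have "\<dots> = id_mat i k"
    proof (cases "i = k")
      case True
      then show ?thesis using N by (simp add: id_mat_def cnj_cis_mult_self sum.delta')
    next
      case False
      have "(enumf i + a) mod ?N \<noteq> (enumf k + a) mod ?N"
      proof
        assume "(enumf i + a) mod ?N = (enumf k + a) mod ?N"
        then have "enumf i = enumf k" by (rule mod_inj[OF enumf_lt enumf_lt])
        then show False using False enumf_inj by auto
      qed
      then show ?thesis using False by (auto simp: id_mat_def intro!: sum.neutral)
    qed
    finally show ?thesis .
  qed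
  have 2: "mmult ?W (adj ?W) i k = id_mat i k" for i k
  proof -
    have "mmult ?W (adj ?W) i k = (\<Sum>j\<in>(UNIV::'n set). (\<lambda>y. if enumf i = (y + a) mod ?N \<and> enumf k = (y + a) mod ?N
        then 1 else 0) (enumf j))"
      unfolding mmult_def adj_def weyl_def by (rule sum.cong) (auto simp: cnj_cis_mult_self)
    also have "\<dots> = (\<Sum>y<?N. if enumf i = (y + a) mod ?N \<and> enumf k = (y + a) mod ?N then 1 else 0)"
      by (rule sum_enum)
    also have "\<dots> = id_mat i k"
    proof (cases "i = k")
      case True
      have u: "\<exists>!y. y < ?N \<and> (y + a) mod ?N = enumf k"
        by (rule mod_uniq[OF enumf_lt[of k], of a])
      have "(\<Sum>y<?N. if enumf k = (y + a) mod ?N \<and> enumf k = (y + a) mod ?N then (1::complex) else 0)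
          = (\<Sum>y<?N. if (y + a) mod ?N = enumf k then 1 else 0)"
        by (rule sum.cong) auto
      also have "\<dots> = 1" by (rule sum_unique[OF u])
      finally show ?thesis unfolding True id_mat_def by simp
    next
      case False
      then have "enumf i \<noteq> enumf k" using enumf_inj by blast
      then show ?thesis using False by (auto simp: id_mat_def intro!: sum.neutral)
    qed
    finally show ?thesis .
  qed
  show ?thesis unfolding unitary_def by (intro conjI ext) (simp_all only: 1 2)
qed

lemma weyl_K:
  fixes i j k l :: "'n::finite"
  shows "(\<Sum>a<card (UNIV::'n set). \<Sum>b<card (UNIV::'n set). cnj (weyl a b k l) * weyl a b i j)
     = of_nat (card (UNIV::'n set)) * (if i = k \<and> j = l then 1 else 0)"
proof -
  let ?N = "card (UNIV::'n set)"
  let ?C = "\<lambda>a. enumf k = (enumf l + a) mod ?N \<and> enumf i = (enumf j + a) mod ?N"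
  let ?g = "\<lambda>b. cis (2 * pi * real b * real_of_int (int (enumf j) - int (enumf l)) / real ?N)"
  have N: "0 < ?N" by (simp add: finite_UNIV_card_ge_0)
  have tm1: "cnj (weyl a b k l) * weyl a b i j = (if ?C a then ?g b else 0)" for a b
  proof (cases "?C a")
    case True
    have "cnj (cis (2 * pi * real b * real (enumf l) / real ?N)) * cis (2 * pi * real b * real (enumf j) / real ?N) = ?g b"
      unfolding cis_cnj cis_mult by (rule arg_cong[where f=cis]) (simp add: field_simps)
    then show ?thesis using True unfolding weyl_def by simp
  next
    case False
    then show ?thesis unfolding weyl_def by auto
  qed
  have gsum: "(\<Sum>b<?N. ?g b) = (if j = l then of_nat ?N else 0)"
  proof -
    have "\<bar>int (enumf j) - int (enumf l)\<bar> < int ?N" using enumf_lt[of j] enumf_lt[of l] by simp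
    then have "(\<Sum>b<?N. ?g b) = (if int (enumf j) - int (enumf l) = 0 then of_nat ?N else 0)"
      by (rule geo_cis)
    also have "(int (enumf j) - int (enumf l) = 0) = (j = l)" using enumf_inj by auto
    finally show ?thesis .
  qed
  have "(\<Sum>a<?N. \<Sum>b<?N. cnj (weyl a b k l) * weyl a b i j) = (\<Sum>a<?N. if ?C a then (if j = l then of_nat ?N else 0) else 0)"
  proof -
    have sif: "(\<Sum>b<?N. if P then f b else 0) = (if P then (\<Sum>b<?N. f b) else 0)" for P and f :: "nat \<Rightarrow> complex"
      by simp
    show ?thesis unfolding tm1 sif gsum ..
  qed
  also have "\<dots> = of_nat ?N * (if i = k \<and> j = l then 1 else 0)"
  proof (cases "j = l")
    case False then show ?thesis by simp
  next
    case jl: True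
    show ?thesis
    proof (cases "i = k")
      case False
      then have "enumf i \<noteq> enumf k" using enumf_inj by blast
      then have nC: "\<not> ?C a" for a using jl by auto
      have "(\<Sum>a<?N. if ?C a then (if j = l then of_nat ?N else 0) else (0::complex)) = 0"
        using nC jl by (intro sum.neutral) auto
      then show ?thesis using False by simp
    next
      case True
      have u: "\<exists>!y. y < ?N \<and> (y + enumf j) mod ?N = enumf i"
        by (rule mod_uniq[OF enumf_lt[of i]])
      have "(\<Sum>a<?N. if ?C a then (if j = l then of_nat ?N else 0) else 0)
          = (\<Sum>a<?N. if (a + enumf j) mod ?N = enumf i then of_nat ?N else (0::complex))"
        using jl True by (intro sum.cong refl) (auto simp: add.commute)
      also have "\<dots> = of_nat ?N" by (rule sum_unique[OF u])
      finally show ?thesis using jl True by simp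
    qed
  qed
  finally show ?thesis .
qed

definition IA :: "'n::finite itself \<Rightarrow> (nat \<times> nat) set" where
  "IA _ = {..<card (UNIV::'n set)} \<times> {..<card (UNIV::'n set)}"

definition PB :: "(nat \<times> nat) \<times> (nat \<times> nat) \<Rightarrow> ('a::finite \<times> 'b::finite) cmat" where
  "PB \<kappa> = kron (weyl (fst (fst \<kappa>)) (snd (fst \<kappa>))) (weyl (fst (snd \<kappa>)) (snd (snd \<kappa>)))"

lemma weyl_K':
  fixes i j k l :: "'n::finite"
  shows "(\<Sum>\<kappa>\<in>IA TYPE('n). cnj (weyl (fst \<kappa>) (snd \<kappa>) k l) * weyl (fst \<kappa>) (snd \<kappa>) i j)
     = of_nat (card (UNIV::'n set)) * (if i = k \<and> j = l then 1 else 0)"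
  unfolding IA_def weyl_K[symmetric] by (simp add: sum.cartesian_product case_prod_unfold)

lemma PB_K:
  fixes X Y X' Y' :: "'a::finite \<times> 'b::finite"
  shows "(\<Sum>\<kappa>\<in>IA TYPE('a) \<times> IA TYPE('b). cnj (PB \<kappa> X' Y') * PB \<kappa> X Y)
     = of_nat (card (UNIV::'a set) * card (UNIV::'b set)) * (if X = X' \<and> Y = Y' then 1 else 0)"
proof -
  have "(\<Sum>\<kappa>\<in>IA TYPE('a) \<times> IA TYPE('b). cnj (PB \<kappa> X' Y') * PB \<kappa> X Y)
    = (\<Sum>\<kappa>\<in>IA TYPE('a). cnj (weyl (fst \<kappa>) (snd \<kappa>) (fst X') (fst Y')) * weyl (fst \<kappa>) (snd \<kappa>) (fst X) (fst Y))
      * (\<Sum>\<kappa>\<in>IA TYPE('b). cnj (weyl (fst \<kappa>) (snd \<kappa>) (snd X') (snd Y')) * weyl (fst \<kappa>) (snd \<kappa>) (snd X) (snd Y))"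
    unfolding sum_product sum.cartesian_product PB_def kron_def
    by (intro sum.cong refl) (simp add: case_prod_unfold mult_ac)
  also have "\<dots> = of_nat (card (UNIV::'a set) * card (UNIV::'b set)) * (if X = X' \<and> Y = Y' then 1 else 0)"
    unfolding weyl_K' by (auto simp: prod_eq_iff)
  finally show ?thesis .
qed

lemma PB_decomp:
  fixes U :: "('a::finite \<times> 'b::finite) cmat"
  defines "d \<equiv> card (UNIV::'a set) * card (UNIV::'b set)"
  defines "\<alpha> \<equiv> (\<lambda>\<kappa>. (\<Sum>X'\<in>UNIV. \<Sum>Y'\<in>UNIV. cnj (PB \<kappa> X' Y') * U X' Y') / of_nat d)"
  shows "U X Y = (\<Sum>\<kappa>\<in>IA TYPE('a) \<times> IA TYPE('b). \<alpha> \<kappa> * PB \<kappa> X Y)"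
proof -
  have d: "0 < d" unfolding d_def by (simp add: finite_UNIV_card_ge_0)
  have "(\<Sum>\<kappa>\<in>IA TYPE('a) \<times> IA TYPE('b). \<alpha> \<kappa> * PB \<kappa> X Y)
     = (\<Sum>X'\<in>UNIV. \<Sum>Y'\<in>UNIV. U X' Y' * (\<Sum>\<kappa>\<in>IA TYPE('a) \<times> IA TYPE('b). cnj (PB \<kappa> X' Y') * PB \<kappa> X Y)) / of_nat d"
    unfolding \<alpha>_def sum_divide_distrib sum_distrib_left sum_distrib_right
    by (subst sum.swap, rule sum.cong[OF refl], subst sum.swap, simp add: mult_ac)
  also have "\<dots> = (\<Sum>X'\<in>UNIV. \<Sum>Y'\<in>UNIV. U X' Y' * (of_nat d * (if X = X' \<and> Y = Y' then 1 else 0))) / of_nat d"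
    unfolding PB_K d_def ..
  also have "\<dots> = (\<Sum>X'\<in>UNIV. if X = X' then (\<Sum>Y'\<in>UNIV. if Y = Y' then U X' Y' * of_nat d else 0) else 0) / of_nat d"
  proof -
    have e: "x * (c * (if P then 1 else 0)) = (if P then x * c else 0)" for x c :: complex and P by simp
    show ?thesis unfolding e by (intro arg_cong[where f="\<lambda>z. z / of_nat d"] sum.cong refl) auto
  qed
  also have "\<dots> = U X Y" using d by (simp add: sum.delta)
  finally show ?thesis by simp
qed


lemma card_UNIV_prod: "card (UNIV::('a::finite \<times> 'b::finite) set) = card (UNIV::'a set) * card (UNIV::'b set)"
  by (simp add: UNIV_Times_UNIV[symmetric] card_cartesian_product del: UNIV_Times_UNIV)

lemma PB_parseval:
  fixes U :: "('a::finite \<times> 'b::finite) cmat"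
  assumes U: "unitary U"
  defines "d \<equiv> card (UNIV::'a set) * card (UNIV::'b set)"
  defines "\<alpha> \<equiv> (\<lambda>\<kappa>. (\<Sum>X'\<in>UNIV. \<Sum>Y'\<in>UNIV. cnj (PB \<kappa> X' Y') * U X' Y') / of_nat d)"
  shows "(\<Sum>\<kappa>\<in>IA TYPE('a) \<times> IA TYPE('b). (cmod (\<alpha> \<kappa>))^2) = 1"
proof -
  let ?I = "IA TYPE('a) \<times> IA TYPE('b)"
  have d: "0 < d" unfolding d_def by (simp add: finite_UNIV_card_ge_0)
  have c\<alpha>: "cnj (\<alpha> \<kappa>) = (\<Sum>X\<in>UNIV. \<Sum>Y\<in>UNIV. PB \<kappa> X Y * cnj (U X Y)) / of_nat d" for \<kappa>
    unfolding \<alpha>_def by (simp add: cnj_sum)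
  have "(\<Sum>\<kappa>\<in>?I. \<alpha> \<kappa> * cnj (\<alpha> \<kappa>)) = (\<Sum>X\<in>UNIV. \<Sum>Y\<in>UNIV. cnj (U X Y) * (\<Sum>\<kappa>\<in>?I. \<alpha> \<kappa> * PB \<kappa> X Y)) / of_nat d"
    unfolding c\<alpha> sum_divide_distrib sum_distrib_left sum_distrib_right
    by (subst sum.swap, rule sum.cong[OF refl], subst sum.swap, simp add: mult_ac)
  also have "\<dots> = (\<Sum>X\<in>UNIV. \<Sum>Y\<in>UNIV. cnj (U X Y) * U X Y) / of_nat d"
  proof -
    have dec: "(\<Sum>\<kappa>\<in>?I. \<alpha> \<kappa> * PB \<kappa> X Y) = U X Y" for X Y
      unfolding \<alpha>_def d_def by (rule PB_decomp[symmetric])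
    show ?thesis unfolding dec ..
  qed
  also have "(\<Sum>X\<in>UNIV. \<Sum>Y\<in>UNIV. cnj (U X Y) * U X Y) = complex_of_real (\<Sum>Y\<in>UNIV. \<Sum>X\<in>UNIV. (cmod (U X Y))^2)"
    unfolding cnj_mult_real of_real_sum by (rule sum.swap)
  also have "(\<Sum>Y\<in>UNIV. \<Sum>X\<in>UNIV. (cmod (U X Y))^2) = real d"
    using unitary_colsum[OF U] unfolding d_def card_UNIV_prod by simp
  finally have "(\<Sum>\<kappa>\<in>?I. \<alpha> \<kappa> * cnj (\<alpha> \<kappa>)) = 1" using d by simp
  then have "complex_of_real (\<Sum>\<kappa>\<in>?I. (cmod (\<alpha> \<kappa>))^2) = 1"
    unfolding mult_cnj_real of_real_sum .
  then show ?thesis by (metis of_real_eq_1_iff)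
qed


lemma cs_sum:
  fixes a :: "'k \<Rightarrow> real"
  assumes "finite I"
  shows "(\<Sum>\<kappa>\<in>I. a \<kappa>)^2 \<le> real (card I) * (\<Sum>\<kappa>\<in>I. (a \<kappa>)^2)"
proof -
  have "0 \<le> (\<Sum>\<kappa>\<in>I. \<Sum>\<nu>\<in>I. (a \<kappa> - a \<nu>)^2)" by (intro sum_nonneg) auto
  also have "(\<Sum>\<kappa>\<in>I. \<Sum>\<nu>\<in>I. (a \<kappa> - a \<nu>)^2)
     = (\<Sum>\<kappa>\<in>I. \<Sum>\<nu>\<in>I. (a \<kappa>)^2) + (\<Sum>\<kappa>\<in>I. \<Sum>\<nu>\<in>I. (a \<nu>)^2) - 2 * (\<Sum>\<kappa>\<in>I. \<Sum>\<nu>\<in>I. a \<kappa> * a \<nu>)"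
    by (simp add: power2_diff sum.distrib sum_subtractf sum_distrib_left mult.assoc)
  also have "\<dots> = 2 * (real (card I) * (\<Sum>\<kappa>\<in>I. (a \<kappa>)^2) - (\<Sum>\<kappa>\<in>I. a \<kappa>)^2)"
  proof -
    have "(\<Sum>\<kappa>\<in>I. \<Sum>\<nu>\<in>I. (a \<kappa>)^2) = real (card I) * (\<Sum>\<kappa>\<in>I. (a \<kappa>)^2)"
      by (simp add: sum_distrib_left mult.commute)
    moreover have "(\<Sum>\<kappa>\<in>I. \<Sum>\<nu>\<in>I. (a \<nu>)^2) = real (card I) * (\<Sum>\<kappa>\<in>I. (a \<kappa>)^2)"
      by simp
    moreover have "(\<Sum>\<kappa>\<in>I. \<Sum>\<nu>\<in>I. a \<kappa> * a \<nu>) = (\<Sum>\<kappa>\<in>I. a \<kappa>)^2"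
      by (simp add: sum_product power2_eq_square)
    ultimately show ?thesis by simp
  qed
  finally show ?thesis by simp
qed

lemma unitary_scale:
  fixes W :: "'n::finite cmat"
  assumes ph: "cnj \<phi> * \<phi> = 1" and W: "unitary W"
  shows "unitary (\<lambda>i j. \<phi> * W i j)"
proof -
  have ph2: "\<phi> * cnj \<phi> = 1" using ph by (simp add: mult.commute)
  have t1: "cnj (\<phi> * a) * (\<phi> * b) = cnj a * b" for a b
  proof -
    have "cnj (\<phi> * a) * (\<phi> * b) = (cnj \<phi> * \<phi>) * (cnj a * b)" by (simp add: mult_ac)
    then show ?thesis using ph by simp
  qed
  have t2: "(\<phi> * a) * cnj (\<phi> * b) = a * cnj b" for a b
  proof -
    have "(\<phi> * a) * cnj (\<phi> * b) = (\<phi> * cnj \<phi>) * (a * cnj b)" by (simp add: mult_ac)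
    then show ?thesis using ph2 by simp
  qed
  have "mmult (adj (\<lambda>i j. \<phi> * W i j)) (\<lambda>i j. \<phi> * W i j) = mmult (adj W) W"
    unfolding mmult_def adj_def t1 ..
  moreover have "mmult (\<lambda>i j. \<phi> * W i j) (adj (\<lambda>i j. \<phi> * W i j)) = mmult W (adj W)"
    unfolding mmult_def adj_def t2 ..
  ultimately show ?thesis using W unfolding unitary_def by simp
qed

lemma card_IA: "card (IA TYPE('n::finite)) = card (UNIV::'n set) * card (UNIV::'n set)"
  unfolding IA_def by (simp add: card_cartesian_product)

lemma finite_IA: "finite (IA TYPE('n::finite))"
  unfolding IA_def by simp

lemma decomp_exists:
  fixes U :: "('a::finite \<times> 'b::finite) cmat"
  assumes U: "unitary U"
  shows "\<exists>m c V W. 1 \<le> m \<and> (\<forall>j<m. unitary ((V::nat \<Rightarrow> 'a cmat) j) \<and> unitary ((W::nat \<Rightarrow> 'b cmat) j)) \<and>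
      U = (\<lambda>x y. \<Sum>j<m. complex_of_real (c j) * kron (V j) (W j) x y) \<and>
      2 * (\<Sum>j<m. \<bar>c j\<bar>)^2 - (\<Sum>j<m. (c j)^2) \<le> 2 * real (card (UNIV :: 'a set))^2 * real (card (UNIV :: 'b set))^2 - 1"
proof -
  let ?I = "IA TYPE('a) \<times> IA TYPE('b)"
  let ?nA = "card (UNIV::'a set)" and ?nB = "card (UNIV::'b set)"
  define d where "d = ?nA * ?nB"
  define \<alpha> where "\<alpha> = (\<lambda>\<kappa>. (\<Sum>X'\<in>UNIV. \<Sum>Y'\<in>UNIV. cnj (PB \<kappa> X' Y') * U X' Y') / of_nat d)"
  define m where "m = card ?I"
  have finI: "finite ?I" using finite_IA[where 'n='a] finite_IA[where 'n='b] by (rule finite_cartesian_product)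
  have mval: "m = ?nA * ?nA * (?nB * ?nB)" unfolding m_def by (simp add: card_cartesian_product card_IA)
  have m1: "1 \<le> m" unfolding mval using finite_UNIV_card_ge_0[where 'a='a] finite_UNIV_card_ge_0[where 'a='b] by simp
  obtain h where h: "bij_betw h {0..<m} ?I" using ex_bij_betw_nat_finite[OF finI] unfolding m_def by blast
  define ph where "ph \<kappa> = (if \<alpha> \<kappa> = 0 then 1 else \<alpha> \<kappa> / complex_of_real (cmod (\<alpha> \<kappa>)))" for \<kappa>
  have ph\<alpha>: "complex_of_real (cmod (\<alpha> \<kappa>)) * ph \<kappa> = \<alpha> \<kappa>" for \<kappa>
    unfolding ph_def by simp
  have phu: "cnj (ph \<kappa>) * ph \<kappa> = 1" for \<kappa>
  proof (cases "\<alpha> \<kappa> = 0")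
    case True then show ?thesis unfolding ph_def by simp
  next
    case False
    have "cmod (ph \<kappa>) = 1" unfolding ph_def using False by (simp add: norm_divide)
    then show ?thesis unfolding cnj_mult_real by simp
  qed
  define c where "c j = cmod (\<alpha> (h j))" for j
  define V where "V j = ((\<lambda>i i'. ph (h j) * weyl (fst (fst (h j))) (snd (fst (h j))) i i') :: 'a cmat)" for j
  define W where "W j = (weyl (fst (snd (h j))) (snd (snd (h j))) :: 'b cmat)" for j
  have uni: "\<forall>j<m. unitary (V j) \<and> unitary (W j)"
    unfolding V_def W_def using unitary_scale[OF phu weyl_unitary] weyl_unitary by blast
  have Ueq: "U = (\<lambda>x y. \<Sum>j<m. complex_of_real (c j) * kron (V j) (W j) x y)"
  proof (intro ext)
    fix x y
    have "U x y = (\<Sum>\<kappa>\<in>?I. \<alpha> \<kappa> * PB \<kappa> x y)"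
      unfolding \<alpha>_def d_def by (rule PB_decomp)
    also have "\<dots> = (\<Sum>j\<in>{0..<m}. \<alpha> (h j) * PB (h j) x y)"
      using sum.reindex_bij_betw[OF h, of "\<lambda>\<kappa>. \<alpha> \<kappa> * PB \<kappa> x y"] by simp
    also have "\<dots> = (\<Sum>j<m. complex_of_real (c j) * kron (V j) (W j) x y)"
      unfolding atLeast0LessThan
    proof (intro sum.cong refl)
      fix j
      have "complex_of_real (c j) * kron (V j) (W j) x y = (complex_of_real (cmod (\<alpha> (h j))) * ph (h j)) * PB (h j) x y"
        unfolding c_def V_def W_def PB_def kron_def by (simp add: mult_ac)
      then show "\<alpha> (h j) * PB (h j) x y = complex_of_real (c j) * kron (V j) (W j) x y"
        unfolding ph\<alpha> by simp
    qed
    finally show "U x y = (\<Sum>j<m. complex_of_real (c j) * kron (V j) (W j) x y)" .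
  qed
  have s1: "(\<Sum>j<m. \<bar>c j\<bar>) = (\<Sum>\<kappa>\<in>?I. cmod (\<alpha> \<kappa>))"
    using sum.reindex_bij_betw[OF h, of "\<lambda>\<kappa>. cmod (\<alpha> \<kappa>)"] unfolding c_def atLeast0LessThan by simp
  have par: "(\<Sum>\<kappa>\<in>?I. (cmod (\<alpha> \<kappa>))^2) = 1"
    unfolding \<alpha>_def d_def by (rule PB_parseval[OF U])
  have s2: "(\<Sum>j<m. (c j)^2) = 1"
    using sum.reindex_bij_betw[OF h, of "\<lambda>\<kappa>. (cmod (\<alpha> \<kappa>))^2"] par unfolding c_def atLeast0LessThan by simp
  have cs: "(\<Sum>\<kappa>\<in>?I. cmod (\<alpha> \<kappa>))^2 \<le> real m"
    using cs_sum[OF finI, of "\<lambda>\<kappa>. cmod (\<alpha> \<kappa>)"] par unfolding m_def by simp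
  have bound: "2 * (\<Sum>j<m. \<bar>c j\<bar>)^2 - (\<Sum>j<m. (c j)^2) \<le> 2 * real ?nA^2 * real ?nB^2 - 1"
    unfolding s1 s2 using cs unfolding mval by (simp add: power2_eq_square)
  show ?thesis using m1 uni Ueq bound by blast
qed

lemma in_rob_set:
  fixes U :: "('a::finite \<times> 'b::finite) cmat"
  assumes U: "unitary U"
    and uv: "\<forall>j<m. unitary ((V::nat \<Rightarrow> 'a cmat) j) \<and> unitary ((W::nat \<Rightarrow> 'b cmat) j)"
    and dec: "U = (\<lambda>x y. \<Sum>j<m. complex_of_real (c j) * kron (V j) (W j) x y)"
  shows "0 \<le> (2*(\<Sum>j<m. \<bar>c j\<bar>)^2 - (\<Sum>j<m. (c j)^2) - 1)/2 \<and>
    (\<exists>\<sigma>. separable \<sigma> \<and> separable (\<lambda>a b. (choi U a b + complex_of_real ((2*(\<Sum>j<m. \<bar>c j\<bar>)^2 - (\<Sum>j<m. (c j)^2) - 1)/2) * \<sigma> a b)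
        / complex_of_real (1 + (2*(\<Sum>j<m. \<bar>c j\<bar>)^2 - (\<Sum>j<m. (c j)^2) - 1)/2)))"
proof -
  define xv where "xv = (\<lambda>j (p::'a\<times>'a). V j (snd p) (fst p) / complex_of_real (sqrt (real (card (UNIV::'a set)))))"
  define yv where "yv = (\<lambda>j (p::'b\<times>'b). W j (snd p) (fst p) / complex_of_real (sqrt (real (card (UNIV::'b set)))))"
  have ch: "choi U = (\<lambda>X Y. psi c xv yv m X * cnj (psi c xv yv m Y))"
    unfolding xv_def yv_def by (rule choi_psi[OF dec])
  have nx: "\<forall>j<m. nrm (xv j) = 1 \<and> nrm (yv j) = 1"
    using uv by (simp add: xv_def yv_def nrm_xv)
  show ?thesis by (rule rob_bound[OF nx ch trace_choi[OF U]])
qed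

theorem lemma3:
  fixes U :: "('a::finite \<times> 'b::finite) cmat"
  assumes "unitary U"
  shows "1 \<le> choi_robustness U \<and> choi_robustness U \<le> product_extent U \<and>
         product_extent U \<le> 2 * real (card (UNIV :: 'a set))^2 * real (card (UNIV :: 'b set))^2 - 1"
proof -
  let ?S = "{2 * (\<Sum>j<m. \<bar>c j\<bar>)^2 - (\<Sum>j<m. (c j)^2) | m c V W.
      1 \<le> m \<and> (\<forall>j<m. unitary ((V::nat \<Rightarrow> 'a cmat) j) \<and> unitary ((W::nat \<Rightarrow> 'b cmat) j)) \<and>
      U = (\<lambda>x y. \<Sum>j<m. complex_of_real (c j) * kron (V j) (W j) x y)}"
  let ?R = "{s::real. 0 \<le> s \<and> (\<exists>\<sigma>::(('a \<times> 'a) \<times> ('b \<times> 'b)) cmat. separable \<sigma> \<and>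
       separable (\<lambda>x y. (choi U x y + complex_of_real s * \<sigma> x y) / complex_of_real (1 + s)))}"
  have pe: "product_extent U = Inf ?S" unfolding product_extent_def ..
  have cr: "choi_robustness U = 1 + 2 * Inf ?R" unfolding choi_robustness_def robustness_def ..
  obtain m c V W where d0: "1 \<le> m" "\<forall>j<m. unitary ((V::nat \<Rightarrow> 'a cmat) j) \<and> unitary ((W::nat \<Rightarrow> 'b cmat) j)"
      "U = (\<lambda>x y. \<Sum>j<m. complex_of_real (c j) * kron (V j) (W j) x y)"
      "2 * (\<Sum>j<m. \<bar>c j\<bar>)^2 - (\<Sum>j<m. (c j)^2) \<le> 2 * real (card (UNIV :: 'a set))^2 * real (card (UNIV :: 'b set))^2 - 1"
    using decomp_exists[OF assms] by blast
  let ?v0 = "2 * (\<Sum>j<m. \<bar>c j\<bar>)^2 - (\<Sum>j<m. (c j)^2)"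
  have v0S: "?v0 \<in> ?S"
    unfolding mem_Collect_eq
    by (rule exI[of _ m], rule exI[of _ c], rule exI[of _ V], rule exI[of _ W]) (use d0 in simp)
  have Sne: "?S \<noteq> {}" using v0S by (metis empty_iff)
  have Spos: "0 \<le> v" if "v \<in> ?S" for v
  proof -
    from that obtain m' :: nat and c' :: "nat \<Rightarrow> real" where v: "v = 2 * (\<Sum>j<m'. \<bar>c' j\<bar>)^2 - (\<Sum>j<m'. (c' j)^2)" by blast
    have "0 \<le> (\<Sum>jk\<in>offd m'. \<bar>c' (fst jk) * c' (snd jk)\<bar>)" by (intro sum_nonneg) auto
    moreover have "0 \<le> (\<Sum>j<m'. (c' j)^2)" by (intro sum_nonneg) auto
    ultimately show ?thesis unfolding v sum_abs_square by simp
  qed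
  have Sbdd: "bdd_below ?S" by (intro bdd_belowI[of _ 0] Spos)
  have SR: "(v - 1) / 2 \<in> ?R" if "v \<in> ?S" for v
  proof -
    from that obtain m' :: nat and c' :: "nat \<Rightarrow> real" and V' :: "nat \<Rightarrow> 'a cmat" and W' :: "nat \<Rightarrow> 'b cmat" where v: "v = 2 * (\<Sum>j<m'. \<bar>c' j\<bar>)^2 - (\<Sum>j<m'. (c' j)^2)"
      and uv: "\<forall>j<m'. unitary ((V'::nat \<Rightarrow> 'a cmat) j) \<and> unitary ((W'::nat \<Rightarrow> 'b cmat) j)"
      and dec: "U = (\<lambda>x y. \<Sum>j<m'. complex_of_real (c' j) * kron (V' j) (W' j) x y)" by blast
    show ?thesis unfolding mem_Collect_eq v by (rule in_rob_set[OF assms uv dec])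
  qed
  have Rne: "?R \<noteq> {}" using SR[OF v0S] by (metis empty_iff)
  have Rbdd: "bdd_below ?R" by (intro bdd_belowI[of _ 0]) simp
  have R0: "0 \<le> Inf ?R" by (rule cInf_greatest[OF Rne]) simp
  have RS: "1 + 2 * Inf ?R \<le> Inf ?S"
  proof (rule cInf_greatest[OF Sne])
    fix v assume "v \<in> ?S"
    then have "Inf ?R \<le> (v - 1) / 2" using SR Rbdd by (intro cInf_lower) auto
    then show "1 + 2 * Inf ?R \<le> v" by simp
  qed
  have Sb: "Inf ?S \<le> ?v0" by (rule cInf_lower[OF v0S Sbdd])
  show ?thesis unfolding pe cr using R0 RS Sb d0(4) by simp
qed


end
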